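(* There exists a crystal framework $\mathcal{C}=(G,p)$ in $\mathbb{R}^2$ which is first-order rigid and which is continuously flexible, i.e. there are $t_1>0$ and placements $p_t:V\to\mathbb{R}^2$, $t\in[0,t_1]$, with $p_0=p$, $t\mapsto p_t(v)$ continuous for every vertex $v$, $\|p_t(v)-p_t(w)\|=\|p(v)-p(w)\|$ for every edge $vw\in E$ and every $t$, and such that for some $t$ the placement $p_t$ is not of the form $T\circ p$ for an isometry $T$ of $\mathbb{R}^2$.
   Context: A crystal framework in $\mathbb{R}^d$ is a bar-joint framework $(G,p)$, $G=(V,E)$ a countable simple graph, $p:V\to\mathbb{R}^d$ injective, for which there are $d$ linearly independent vectors $a_1,\dots,a_d$ such that $\mathbb{Z}^d$ acts on $G$ by graph automorphisms $v\mapsto k\cdot v$ with $p(k\cdot v)=p(v)+\sum_ik_ia_i$ and with finitely many orbits of vertices and of edges. An infinitesimal flex is a map $u:V\to\mathbb{C}^d$ with $(u(v)-u(w))\cdot(p(v)-p(w))=0$ for all $vw\in E$; the framework is first-order rigid if every infinitesimal flex lies in the complex linear span of the rigid-motion fields $v\mapsto Sp(v)+b$ ($S$ real skew-symmetric, $b\in\mathbb{R}^d$). *)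

theory Defs
  imports "HOL-Analysis.Analysis"
begin

text \<open>Vertices are natural numbers (every countable graph is isomorphic to one on a
subset of nat).\<close>

definition simple_graph :: "nat set \<Rightarrow> nat set set \<Rightarrow> bool" where
  "simple_graph V E \<longleftrightarrow> (\<forall>e\<in>E. e \<subseteq> V \<and> card e = 2)"

definition lattice_vec :: "real^2 \<Rightarrow> real^2 \<Rightarrow> int \<times> int \<Rightarrow> real^2" where
  "lattice_vec a1 a2 k = of_int (fst k) *\<^sub>R a1 + of_int (snd k) *\<^sub>R a2"

definition graph_aut_action ::
  "nat set \<Rightarrow> nat set set \<Rightarrow> (int \<times> int \<Rightarrow> nat \<Rightarrow> nat) \<Rightarrow> bool" where
  "graph_aut_action V E act \<longleftrightarrow>
     (\<forall>k. \<forall>v\<in>V. act k v \<in> V) \<and>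
     (\<forall>v\<in>V. act (0,0) v = v) \<and>
     (\<forall>k l. \<forall>v\<in>V. act (fst k + fst l, snd k + snd l) v = act k (act l v)) \<and>
     (\<forall>k. \<forall>v\<in>V. \<forall>w\<in>V. {v, w} \<in> E \<longleftrightarrow> {act k v, act k w} \<in> E)"

definition crystal_framework :: "nat set \<Rightarrow> nat set set \<Rightarrow> (nat \<Rightarrow> real^2) \<Rightarrow> bool" where
  "crystal_framework V E p \<longleftrightarrow>
     simple_graph V E \<and> inj_on p V \<and>
     (\<exists>a1 a2 act.
        (\<forall>c1 c2 :: real. c1 *\<^sub>R a1 + c2 *\<^sub>R a2 = 0 \<longrightarrow> c1 = 0 \<and> c2 = 0) \<and>
        graph_aut_action V E act \<and>
        (\<forall>k. \<forall>v\<in>V. p (act k v) = p v + lattice_vec a1 a2 k) \<and>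
        finite ((\<lambda>v. {act k v | k. True}) ` V) \<and>
        finite ((\<lambda>e. {act k ` e | k. True}) ` E))"

definition cvec :: "real^2 \<Rightarrow> complex^2" where
  "cvec x = (\<chi> i. complex_of_real (x $ i))"

definition cdot :: "complex^2 \<Rightarrow> real^2 \<Rightarrow> complex" where
  "cdot u x = (\<Sum>i\<in>UNIV. u $ i * complex_of_real (x $ i))"

definition inf_flex :: "nat set \<Rightarrow> nat set set \<Rightarrow> (nat \<Rightarrow> real^2) \<Rightarrow> (nat \<Rightarrow> complex^2) \<Rightarrow> bool" where
  "inf_flex V E p u \<longleftrightarrow>
     (\<forall>v\<in>V. \<forall>w\<in>V. {v, w} \<in> E \<longrightarrow> cdot (u v - u w) (p v - p w) = 0)"

definition skew :: "real^2^2 \<Rightarrow> bool" where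
  "skew S \<longleftrightarrow> transpose S = - S"

definition in_rigid_span :: "nat set \<Rightarrow> (nat \<Rightarrow> real^2) \<Rightarrow> (nat \<Rightarrow> complex^2) \<Rightarrow> bool" where
  "in_rigid_span V p u \<longleftrightarrow>
     (\<exists>n (c :: nat \<Rightarrow> complex) (S :: nat \<Rightarrow> real^2^2) (b :: nat \<Rightarrow> real^2).
        (\<forall>j<n. skew (S j)) \<and>
        (\<forall>v\<in>V. u v = (\<Sum>j<n. c j *s cvec (S j *v p v + b j))))"

definition first_order_rigid :: "nat set \<Rightarrow> nat set set \<Rightarrow> (nat \<Rightarrow> real^2) \<Rightarrow> bool" where
  "first_order_rigid V E p \<longleftrightarrow> (\<forall>u. inf_flex V E p u \<longrightarrow> in_rigid_span V p u)"

definition isometry2 :: "(real^2 \<Rightarrow> real^2) \<Rightarrow> bool" where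
  "isometry2 T \<longleftrightarrow> (\<forall>x y. dist (T x) (T y) = dist x y)"

definition continuously_flexible :: "nat set \<Rightarrow> nat set set \<Rightarrow> (nat \<Rightarrow> real^2) \<Rightarrow> bool" where
  "continuously_flexible V E p \<longleftrightarrow>
     (\<exists>t1 > 0. \<exists>P :: real \<Rightarrow> nat \<Rightarrow> real^2.
        (\<forall>v\<in>V. P 0 v = p v) \<and>
        (\<forall>v\<in>V. continuous_on {0..t1} (\<lambda>t. P t v)) \<and>
        (\<forall>t\<in>{0..t1}. \<forall>v\<in>V. \<forall>w\<in>V. {v, w} \<in> E \<longrightarrow> dist (P t v) (P t w) = dist (p v) (p w)) \<and>
        (\<exists>t\<in>{0..t1}. \<not> (\<exists>T. isometry2 T \<and> (\<forall>v\<in>V. P t v = T (p v)))))"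

end

theory Submission imports Defs "HOL-Library.Countable" begin

definition mk :: "real \<Rightarrow> real \<Rightarrow> real^2" where "mk a b = vector [a, b]"

lemma mk_nth [simp]: "mk a b $ 1 = a" "mk a b $ 2 = b"
  by (simp_all add: mk_def)

lemma vec2_eq_iff: "(x::'a^2) = y \<longleftrightarrow> x$1 = y$1 \<and> x$2 = y$2"
  by (simp add: vec_eq_iff forall_2)

lemma norm_r2: "norm (x::real^2) = sqrt ((x$1)^2 + (x$2)^2)"
  by (simp add: norm_vec_def L2_set_def sum_2)

lemma dist_r2: "dist (x::real^2) y = sqrt ((x$1 - y$1)^2 + (x$2 - y$2)^2)"
  by (simp add: dist_norm norm_r2)

definition hh :: "real \<Rightarrow> real" where "hh x = 2*x*(2-x)/(x^2+4)"
definition kk :: "real \<Rightarrow> real" where "kk x = 2*x*(2+x)/(x^2+4)"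
definition Rel :: "real \<Rightarrow> real \<Rightarrow> bool" where "Rel a b \<longleftrightarrow> (1-a)*b^2 + 4*b - a^2 = 0"

lemma hk_circ: "(hh s)^2 + (kk s)^2 = 2*(kk s - hh s)"
proof -
  have "s^2+4 > (0::real)" using zero_le_power2[of s] by linarith
  then show ?thesis unfolding hh_def kk_def by (simp add: field_simps power2_eq_square) algebra
qed

lemma f_ident: "(2 + hh s + hh r)^2 + (2 - kk s + kk r)^2 = 8 + 32*((1-s)*r^2 + 4*r - s^2)/((s^2+4)*(r^2+4))"
proof -
  have a: "s^2+4 \<noteq> (0::real)" "r^2+4\<noteq>(0::real)" using zero_le_power2[of s] zero_le_power2[of r] by linarith+
  show ?thesis unfolding hh_def kk_def
    apply (simp add: divide_simps a)
    apply algebra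
    done
qed

definition Ff :: "real \<Rightarrow> real" where "Ff x = x^2 / (2 + sqrt (max 0 (4 + (1-x)*x^2)))"
definition Bf :: "real \<Rightarrow> real" where "Bf x = (sqrt (x^4 + 4*x^2 + 16*x) - x^2) / 2"

lemma Ff_rel: assumes "0 \<le> x" "x \<le> 2" shows "Rel x (Ff x)"
proof -
  have q: "0 \<le> 4 + (1-x)*x^2"
  proof (cases "x \<le> 1")
    case True then show ?thesis using assms by (simp add: add_nonneg_nonneg)
  next
    case False
    have "(x-1)*x^2 \<le> 1*2^2" using False assms by (intro mult_mono power_mono) auto
    then show ?thesis by (simp add: algebra_simps)
  qed
  define r where "r = sqrt (4 + (1-x)*x^2)"
  have r0: "r \<ge> 0" and r2: "r^2 = 4 + (1-x)*x^2" using q by (auto simp: r_def)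
  have F: "Ff x = x^2/(2+r)" using q by (simp add: Ff_def r_def)
  have "(1-x)*(x^2/(2+r))^2 + 4*(x^2/(2+r)) - x^2 = x^2*((1-x)*x^2 + 4 - r^2)/(2+r)^2"
    using r0 by (simp add: divide_simps) algebra
  also have "\<dots> = 0" using r2 by simp
  finally show ?thesis unfolding Rel_def F .
qed

lemma Ff_range: assumes "0 \<le> x" "x \<le> 2" shows "0 \<le> Ff x" "Ff x \<le> 2"
proof -
  define q where "q = sqrt (max 0 (4 + (1-x)*x^2))"
  have q0: "0 \<le> q" by (simp add: q_def)
  have F: "Ff x = x^2/(2+q)" by (simp add: Ff_def q_def)
  show "0 \<le> Ff x" unfolding F using q0 by simp
  have "x^2/(2+q) \<le> x^2/2" using q0 by (intro divide_left_mono) auto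
  also have "\<dots> \<le> 2^2/2" using assms by (intro divide_right_mono power_mono) auto
  finally show "Ff x \<le> 2" unfolding F by simp
qed

lemma Bf_rel: assumes "0 \<le> x" shows "Rel (Bf x) x"
proof -
  define r where "r = sqrt (x^4 + 4*x^2 + 16*x)"
  have r2: "r^2 = x^4 + 4*x^2 + 16*x" using assms by (simp add: r_def)
  have b: "Bf x = (r - x^2)/2" by (simp add: Bf_def r_def)
  have "(Bf x)^2 + Bf x * x^2 = (r^2 - x^4)/4" unfolding b by (simp add: field_simps power2_eq_square power4_eq_xxxx)
  then show ?thesis unfolding Rel_def using r2 by (simp add: algebra_simps)
qed

lemma Bf_range: assumes "0 \<le> x" shows "0 \<le> Bf x" "Bf x \<le> 2"
proof -
  have a: "x^2 \<le> sqrt (x^4 + 4*x^2 + 16*x)"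
    using assms by (intro real_le_rsqrt) (simp add: power2_eq_square power4_eq_xxxx)
  then show "0 \<le> Bf x" by (simp add: Bf_def)
  have "sqrt (x^4 + 4*x^2 + 16*x) \<le> 4 + x^2"
  proof (rule real_sqrt_le_iff[THEN iffD2, of _ "(4+x^2)^2", simplified])
    have "0 \<le> 4*(x-2)^2" by simp
    then show "x^4 + 4*x^2 + 16*x \<le> (4+x^2)^2" by (simp add: power2_eq_square power4_eq_xxxx algebra_simps)
  qed
  then show "Bf x \<le> 2" by (simp add: Bf_def)
qed

lemma mk_add: "mk a b + mk c d = mk (a+c) (b+d)" by (simp add: vec2_eq_iff)
lemma mk_diff: "mk a b - mk c d = mk (a-c) (b-d)" by (simp add: vec2_eq_iff)
lemma norm_mk: "norm (mk a b) = sqrt (a^2 + b^2)" by (simp add: norm_r2)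
lemma mk_alt: "mk a b = a *\<^sub>R (vector [1,0]::real^2) + b *\<^sub>R vector [0,1]" by (simp add: vec2_eq_iff)

lemma norm_e: "norm (mk 1 1 + mk (hh s) (- kk s)) = sqrt 2"
proof -
  have "(1 + hh s)^2 + (1 - kk s)^2 = 2" using hk_circ[of s] by (simp add: power2_eq_square algebra_simps)
  then show ?thesis by (simp add: mk_add norm_mk)
qed

lemma norm_e': "norm (mk 1 (-1) + mk (hh s) (kk s)) = sqrt 2"
proof -
  have "(1 + hh s)^2 + (-1 + kk s)^2 = 2" using hk_circ[of s] by (simp add: power2_eq_square algebra_simps)
  then show ?thesis by (simp add: mk_add norm_mk)
qed

lemma norm_f: assumes "Rel s r" shows "norm (mk 2 2 + (mk (hh s) (- kk s) + mk (hh r) (kk r))) = sqrt 8"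
proof -
  have "(2 + hh s + hh r)^2 + (2 - kk s + kk r)^2 = 8" using f_ident[of s r] assms by (simp add: Rel_def)
  then show ?thesis by (simp add: mk_add norm_mk algebra_simps)
qed

lemma norm_f': assumes "Rel s r" shows "norm (mk 2 (-2) + (mk (hh s) (kk s) + mk (hh r) (- kk r))) = sqrt 8"
proof -
  have "(2 + hh s + hh r)^2 + (2 - kk s + kk r)^2 = 8" using f_ident[of s r] assms by (simp add: Rel_def)
  then have "(2 + hh s + hh r)^2 + (-2 + kk s - kk r)^2 = 8" by (simp add: power2_eq_square algebra_simps)
  then show ?thesis by (simp add: mk_add norm_mk algebra_simps)
qed

definition sig :: "real \<Rightarrow> int \<Rightarrow> real" where
  "sig t n = (if 0 \<le> n then (Ff ^^ nat n) t else (Bf ^^ nat (-n)) t)"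

lemma Ff_iter_range: assumes "0 \<le> t" "t \<le> 2" shows "0 \<le> (Ff ^^ m) t \<and> (Ff ^^ m) t \<le> 2"
  by (induction m) (use assms Ff_range in auto)

lemma Bf_iter_range: assumes "0 \<le> t" "t \<le> 2" shows "0 \<le> (Bf ^^ m) t \<and> (Bf ^^ m) t \<le> 2"
  by (induction m) (use assms Bf_range in auto)

lemma sig_range: assumes "0 \<le> t" "t \<le> 1" shows "0 \<le> sig t n" "sig t n \<le> 2"
  using Ff_iter_range[of t] Bf_iter_range[of t] assms by (auto simp: sig_def)

lemma sig_rel: assumes "0 \<le> t" "t \<le> 1" shows "Rel (sig t n) (sig t (n+1))"
proof (cases "0 \<le> n")
  case True
  then have "nat (n+1) = Suc (nat n)" by simp
  then have "sig t (n+1) = Ff (sig t n)" using True by (simp add: sig_def)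
  then show ?thesis using Ff_rel sig_range[OF assms, of n] by simp
next
  case False
  then obtain m where m: "nat (-n) = Suc m" "nat (-(n+1)) = m" by (intro that[of "nat (-n) - 1"]) auto
  have "sig t n = Bf (sig t (n+1))"
  proof (cases "n+1 = 0")
    case True then show ?thesis using False m by (simp add: sig_def)
  next
    case F2: False then show ?thesis using False m by (simp add: sig_def)
  qed
  then show ?thesis using Bf_rel sig_range[OF assms, of "n+1"] by simp
qed

lemma sig_zero: "sig 0 n = 0"
proof -
  have "Ff 0 = 0" "Bf 0 = 0" by (simp_all add: Ff_def Bf_def)
  then have "(Ff ^^ m) 0 = 0" "(Bf ^^ m) 0 = 0" for m by (induction m) auto
  then show ?thesis by (simp add: sig_def)
qed

lemma cont_Ff: "continuous_on UNIV Ff"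
proof -
  have "\<And>x. 2 + sqrt (max 0 (4 + (1-x)*x^2)) \<noteq> 0"
  proof -
    fix x :: real
    have "0 \<le> sqrt (max 0 (4 + (1-x)*x^2))" by simp
    then show "2 + sqrt (max 0 (4 + (1-x)*x^2)) \<noteq> 0" by linarith
  qed
  then show ?thesis unfolding Ff_def by (intro continuous_intros) auto
qed

lemma cont_Bf: "continuous_on UNIV Bf"
  unfolding Bf_def by (intro continuous_intros) auto

lemma cont_iter: fixes f :: "real \<Rightarrow> real" assumes "continuous_on UNIV f" shows "continuous_on UNIV (f ^^ m)"
proof (induction m)
  case 0
  have "(f^^0) = (\<lambda>x. x)" by auto
  then show ?case by (simp add: continuous_on_id)
next
  case (Suc m)
  then show ?case using continuous_on_compose[OF Suc continuous_on_subset[OF assms]] by (simp add: comp_def)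
qed

lemma cont_sig: "continuous_on UNIV (\<lambda>t. sig t n)"
  using cont_iter[OF cont_Ff, of "nat n"] cont_iter[OF cont_Bf, of "nat (-n)"]
  by (cases "0 \<le> n") (simp_all add: sig_def[abs_def] eta_contract_eq)

definition Dv :: "real \<Rightarrow> int \<Rightarrow> real^2" where
  "Dv t n = (if even n then mk (hh (sig t n)) (- kk (sig t n)) else mk (hh (sig t n)) (kk (sig t n)))"

definition Tr :: "real \<Rightarrow> int \<Rightarrow> real^2" where
  "Tr t n = (if 0 \<le> n then (\<Sum>k<nat n. Dv t (int k)) else - (\<Sum>k<nat (-n). Dv t (- int k - 1)))"

lemma Tr_step: "Tr t (n+1) = Tr t n + Dv t n"
proof (cases "0 \<le> n")
  case True
  then have "nat (n+1) = Suc (nat n)" by simp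
  then show ?thesis using True by (simp add: Tr_def)
next
  case False
  then obtain m where m: "nat (-n) = Suc m" "nat (-(n+1)) = m" by (intro that[of "nat (-n) - 1"]) auto
  have mn: "- int m - 1 = n" using m False by simp
  show ?thesis
  proof (cases "n+1 = 0")
    case True
    then have "m = 0" using mn by simp
    have "Tr t (n+1) = 0" using True by (simp add: Tr_def)
    moreover have "n = -1" using True by simp
    moreover have "Tr t n = - Dv t n" using m mn True \<open>m = 0\<close> \<open>n = -1\<close> by (simp add: Tr_def)
    ultimately show ?thesis by simp
  next
    case F2: False then show ?thesis using False m mn by (simp add: Tr_def)
  qed
qed

lemma Tr_diff1: "Tr t (n+1) - Tr t n = Dv t n" by (simp add: Tr_step)
lemma Tr_diff2: "Tr t (n+2) - Tr t n = Dv t n + Dv t (n+1)"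
  using Tr_step[of t "n+1"] Tr_step[of t n] by (simp add: add.assoc)

lemma Dv_zero: "Dv 0 n = 0" by (simp add: Dv_def sig_zero hh_def kk_def vec2_eq_iff)
lemma Tr_zero: "Tr 0 n = 0" by (simp add: Tr_def Dv_zero)

lemma cont_hh: "continuous_on UNIV hh"
proof -
  have "\<And>x::real. x^2 + 4 \<noteq> 0" by (metis add_pos_nonneg zero_le_power2 zero_less_numeral less_irrefl add.commute)
  then show ?thesis unfolding hh_def by (intro continuous_intros) auto
qed
lemma cont_kk: "continuous_on UNIV kk"
proof -
  have "\<And>x::real. x^2 + 4 \<noteq> 0" by (metis add_pos_nonneg zero_le_power2 zero_less_numeral less_irrefl add.commute)
  then show ?thesis unfolding kk_def by (intro continuous_intros) auto
qed

lemma cont_Dv: "continuous_on UNIV (\<lambda>t. Dv t n)"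
proof -
  have a: "continuous_on UNIV (\<lambda>t. hh (sig t n))" "continuous_on UNIV (\<lambda>t. kk (sig t n))"
    using continuous_on_compose2[OF cont_hh cont_sig] continuous_on_compose2[OF cont_kk cont_sig] by auto
  have b: "continuous_on UNIV (\<lambda>t. - kk (sig t n))" using a(2) by (rule continuous_on_minus)
  have c: "continuous_on UNIV (\<lambda>t. f t *\<^sub>R (vector [1,0]::real^2) + g t *\<^sub>R vector [0,1])"
    if "continuous_on UNIV f" "continuous_on UNIV g" for f g :: "real \<Rightarrow> real"
    using that by (intro continuous_on_add continuous_on_scaleR continuous_on_const)
  show ?thesis unfolding Dv_def mk_alt
    using c[OF a(1) b] c[OF a(1) a(2)] by (cases "even n") simp_all
qed

lemma cont_Tr: "continuous_on UNIV (\<lambda>t. Tr t n)"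
proof (cases "0 \<le> n")
  case True
  have "continuous_on UNIV (\<lambda>t. \<Sum>k<nat n. Dv t (int k))" by (intro continuous_on_sum cont_Dv)
  then show ?thesis using True by (simp add: Tr_def)
next
  case False
  have "continuous_on UNIV (\<lambda>t. - (\<Sum>k<nat (-n). Dv t (- int k - 1)))" by (intro continuous_on_minus continuous_on_sum cont_Dv)
  then show ?thesis using False by (simp add: Tr_def)
qed

type_synonym lab = "int \<times> int \<times> nat"

definition pos :: "lab \<Rightarrow> real^2" where
  "pos x = (case x of (i,j,c) \<Rightarrow> mk (2 * of_int i + of_nat c / 2) (of_int j + (if odd c then 1/2 else 0)))"

definition strip :: "lab \<Rightarrow> int" where
  "strip x = (case x of (i,j,c) \<Rightarrow> 2*i + (if 2 \<le> c then 1 else 0))"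

definition offs :: "(nat \<times> int \<times> int \<times> nat) list" where
  "offs = [(0,0,1,0),(1,0,1,1),(0,0,0,1),(1,0,1,0),(2,0,1,2),(3,0,1,3),(2,0,0,3),(3,0,1,2),
           (0,0,1,2),(2,1,-1,0),(0,1,2,0),(2,1,-2,2)]"

definition gen :: "lab \<Rightarrow> lab \<Rightarrow> bool" where
  "gen x y \<longleftrightarrow> (\<exists>c di dj c' i j. (c,di,dj,c') \<in> set offs \<and> x = (i,j,c) \<and> y = (i+di,j+dj,c'))"

lemma dist_shift: "dist ((a::real^2) + A) (b + B) = norm ((b - a) + (B - A))"
proof -
  have "(a + A) - (b + B) = - ((b - a) + (B - A))" by (simp add: algebra_simps)
  then show ?thesis by (simp only: dist_norm norm_minus_cancel)
qed

lemma dist_pos: "dist (pos x) (pos y) = norm (pos y - pos x)"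
  by (metis dist_commute dist_norm)

lemma flex_edge:
  assumes "gen x y" "0 \<le> t" "t \<le> 1"
  shows "dist (pos x + Tr t (strip x)) (pos y + Tr t (strip y)) = dist (pos x) (pos y)"
proof -
  obtain c di dj c' i j where o: "(c,di,dj,c') \<in> set offs" and xy: "x = (i,j,c)" "y = (i+di,j+dj,c')"
    using assms(1) unfolding gen_def by blast
  have "strip y = strip x \<or> (c,di,dj,c') = (0,0,1,2) \<or> (c,di,dj,c') = (2,1,-1,0) \<or>
        (c,di,dj,c') = (0,1,2,0) \<or> (c,di,dj,c') = (2,1,-2,2)"
    using o xy by (auto simp: offs_def strip_def)
  then consider (same) "strip y = strip x" | (e) "(c,di,dj,c') = (0,0,1,2)" | (e') "(c,di,dj,c') = (2,1,-1,0)"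
     | (f) "(c,di,dj,c') = (0,1,2,0)" | (f') "(c,di,dj,c') = (2,1,-2,2)" by blast
  then show ?thesis
  proof cases
    case same then show ?thesis by (simp add: dist_shift dist_pos)
  next
    case e
    then have xy': "x = (i,j,0)" "y = (i,j+1,2)" using xy by auto
    have st: "strip x = 2*i" "strip y = 2*i+1" using xy' by (simp_all add: strip_def)
    have d: "pos y - pos x = mk 1 1" using xy' by (simp add: pos_def mk_diff)
    have D: "Tr t (strip y) - Tr t (strip x) = mk (hh (sig t (2*i))) (- kk (sig t (2*i)))"
      using Tr_diff1[of t "2*i"] st by (simp add: Dv_def)
    show ?thesis unfolding dist_shift d D norm_e
      by (simp add: dist_pos d norm_mk)
  next
    case e'
    then have xy': "x = (i,j,2)" "y = (i+1,j-1,0)" using xy by auto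
    have st: "strip x = 2*i+1" "strip y = (2*i+1)+1" using xy' by (simp_all add: strip_def)
    have d: "pos y - pos x = mk 1 (-1)" using xy' by (simp add: pos_def mk_diff)
    have D: "Tr t (strip y) - Tr t (strip x) = mk (hh (sig t (2*i+1))) (kk (sig t (2*i+1)))"
      using Tr_diff1[of t "2*i+1"] st by (simp add: Dv_def)
    show ?thesis unfolding dist_shift d D norm_e'
      by (simp add: dist_pos d norm_mk)
  next
    case f
    then have xy': "x = (i,j,0)" "y = (i+1,j+2,0)" using xy by auto
    have st: "strip x = 2*i" "strip y = 2*i+2" using xy' by (simp_all add: strip_def)
    have d: "pos y - pos x = mk 2 2" using xy' by (simp add: pos_def mk_diff)
    have D: "Tr t (strip y) - Tr t (strip x) = mk (hh (sig t (2*i))) (- kk (sig t (2*i)))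
               + mk (hh (sig t (2*i+1))) (kk (sig t (2*i+1)))"
      using Tr_diff2[of t "2*i"] st by (simp add: Dv_def)
    have r: "Rel (sig t (2*i)) (sig t (2*i+1))" using sig_rel assms(2,3) by blast
    have n8: "norm (mk 2 2) = sqrt 8" by (simp add: norm_mk)
    show ?thesis unfolding dist_shift d D norm_f[OF r]
      by (simp add: dist_pos d n8)
  next
    case f'
    then have xy': "x = (i,j,2)" "y = (i+1,j-2,2)" using xy by auto
    have st: "strip x = 2*i+1" "strip y = (2*i+1)+2" using xy' by (simp_all add: strip_def)
    have d: "pos y - pos x = mk 2 (-2)" using xy' by (simp add: pos_def mk_diff)
    have D: "Tr t (strip y) - Tr t (strip x) = mk (hh (sig t (2*i+1))) (kk (sig t (2*i+1)))
               + mk (hh (sig t (2*i+1+1))) (- kk (sig t (2*i+1+1)))"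
      using Tr_diff2[of t "2*i+1"] st by (simp add: Dv_def)
    have r: "Rel (sig t (2*i+1)) (sig t (2*i+1+1))" using sig_rel assms(2,3) by blast
    have n8: "norm (mk 2 (-2)) = sqrt 8" by (simp add: norm_mk)
    show ?thesis unfolding dist_shift d D norm_f'[OF r]
      by (simp add: dist_pos d n8)
  qed
qed

definition con :: "(lab \<Rightarrow> complex) \<Rightarrow> (lab \<Rightarrow> complex) \<Rightarrow> bool" where
  "con U1 U2 \<longleftrightarrow> (\<forall>x y. gen x y \<longrightarrow>
     (U1 x - U1 y) * of_real ((pos x)$1 - (pos y)$1) + (U2 x - U2 y) * of_real ((pos x)$2 - (pos y)$2) = 0)"

lemma conD: "con U1 U2 \<Longrightarrow> gen x y \<Longrightarrow>
     (U1 x - U1 y) * of_real ((pos x)$1 - (pos y)$1) + (U2 x - U2 y) * of_real ((pos x)$2 - (pos y)$2) = 0"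
  unfolding con_def by blast

lemma con_rigid:
  assumes "con U1 U2"
  shows "con (\<lambda>x. U1 x - (- Om * of_real ((pos x)$2) + C1)) (\<lambda>x. U2 x - (Om * of_real ((pos x)$1) + C2))"
  unfolding con_def
proof (intro allI impI)
  fix x y assume g: "gen x y"
  have h: "(U1 x - U1 y) * of_real ((pos x)$1 - (pos y)$1) + (U2 x - U2 y) * of_real ((pos x)$2 - (pos y)$2) = 0"
    using conD[OF assms g] .
  show "(U1 x - (- Om * of_real ((pos x)$2) + C1) - (U1 y - (- Om * of_real ((pos y)$2) + C1))) *
          of_real ((pos x)$1 - (pos y)$1) +
        (U2 x - (Om * of_real ((pos x)$1) + C2) - (U2 y - (Om * of_real ((pos y)$1) + C2))) *
          of_real ((pos x)$2 - (pos y)$2) = 0"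
    using h by (simp add: of_real_diff) algebra
qed

lemma gen_ladder:
  assumes "s = 0 \<or> s = 2"
  shows "gen (i,j,s) (i,j+1,s)" "gen (i,j,s+1) (i,j+1,s+1)" "gen (i,j,s) (i,j,s+1)" "gen (i,j,s+1) (i,j+1,s)"
  using assms by (auto simp: gen_def offs_def)

lemma ladder_step0:
  assumes c: "con W1 W2"
  shows "W1 (i,j,0) = 0 \<and> W2 (i,j,0) = 0 \<and> W1 (i,j,1) = 0 \<and> W2 (i,j,1) = 0 \<longleftrightarrow>
         W1 (i,j+1,0) = 0 \<and> W2 (i,j+1,0) = 0 \<and> W1 (i,j+1,1) = 0 \<and> W2 (i,j+1,1) = 0"
proof -
  note g = gen_ladder[of 0 i j, simplified] gen_ladder[of 0 i "j+1", simplified]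
  have e1: "W2 (i,j,0) = W2 (i,j+1,0)"
    using conD[OF c g(1)] by (simp add: pos_def)
  have e2: "W2 (i,j,1) = W2 (i,j+1,1)"
    using conD[OF c g(2)] by (simp add: pos_def)
  have e3: "(W1 (i,j,0) - W1 (i,j,1)) + (W2 (i,j,0) - W2 (i,j,1)) = 0"
    using conD[OF c g(3)] by (simp add: pos_def field_simps, (algebra)?)
  have e4: "(W1 (i,j,1) - W1 (i,j+1,0)) - (W2 (i,j,1) - W2 (i,j+1,0)) = 0"
    using conD[OF c g(4)] by (simp add: pos_def field_simps, (algebra)?)
  have e5: "(W1 (i,j+1,0) - W1 (i,j+1,1)) + (W2 (i,j+1,0) - W2 (i,j+1,1)) = 0"
    using conD[OF c g(7)] by (simp add: pos_def field_simps, (algebra)?)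
  show ?thesis using e1 e2 e3 e4 e5 by (auto simp: algebra_simps)
qed

lemma ladder_step2:
  assumes c: "con W1 W2"
  shows "W1 (i,j,2) = 0 \<and> W2 (i,j,2) = 0 \<and> W1 (i,j,3) = 0 \<and> W2 (i,j,3) = 0 \<longleftrightarrow>
         W1 (i,j+1,2) = 0 \<and> W2 (i,j+1,2) = 0 \<and> W1 (i,j+1,3) = 0 \<and> W2 (i,j+1,3) = 0"
proof -
  note g = gen_ladder[of 2 i j, simplified] gen_ladder[of 2 i "j+1", simplified]
  have e1: "W2 (i,j,2) = W2 (i,j+1,2)"
    using conD[OF c g(1)] by (simp add: pos_def)
  have e2: "W2 (i,j,3) = W2 (i,j+1,3)"
    using conD[OF c g(2)] by (simp add: pos_def)
  have e3: "(W1 (i,j,2) - W1 (i,j,3)) + (W2 (i,j,2) - W2 (i,j,3)) = 0"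
    using conD[OF c g(3)] by (simp add: pos_def field_simps, (algebra)?)
  have e4: "(W1 (i,j,3) - W1 (i,j+1,2)) - (W2 (i,j,3) - W2 (i,j+1,2)) = 0"
    using conD[OF c g(4)] by (simp add: pos_def field_simps, (algebra)?)
  have e5: "(W1 (i,j+1,2) - W1 (i,j+1,3)) + (W2 (i,j+1,2) - W2 (i,j+1,3)) = 0"
    using conD[OF c g(7)] by (simp add: pos_def field_simps, (algebra)?)
  show ?thesis using e1 e2 e3 e4 e5 by (auto simp: algebra_simps)
qed

definition OmS :: "(lab \<Rightarrow> complex) \<Rightarrow> (lab \<Rightarrow> complex) \<Rightarrow> int \<Rightarrow> nat \<Rightarrow> complex" where
  "OmS U1 U2 i s = (U2 (i,0,s+1) - U2 (i,0,s)) - (U1 (i,0,s+1) - U1 (i,0,s))"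
definition C1S :: "(lab \<Rightarrow> complex) \<Rightarrow> (lab \<Rightarrow> complex) \<Rightarrow> int \<Rightarrow> nat \<Rightarrow> complex" where
  "C1S U1 U2 i s = U1 (i,0,s)"
definition C2S :: "(lab \<Rightarrow> complex) \<Rightarrow> (lab \<Rightarrow> complex) \<Rightarrow> int \<Rightarrow> nat \<Rightarrow> complex" where
  "C2S U1 U2 i s = U2 (i,0,s) - OmS U1 U2 i s * of_real (2 * of_int i + of_nat s / 2)"

lemma ladder_all0:
  assumes c: "con W1 W2" and z: "W1 (i,0,0) = 0" "W2 (i,0,0) = 0" "W1 (i,0,1) = 0" "W2 (i,0,1) = 0"
  shows "W1 (i,j,0) = 0 \<and> W2 (i,j,0) = 0 \<and> W1 (i,j,1) = 0 \<and> W2 (i,j,1) = 0"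
proof (rule int_induct[where k=0 and P="\<lambda>j. W1 (i,j,0) = 0 \<and> W2 (i,j,0) = 0 \<and> W1 (i,j,1) = 0 \<and> W2 (i,j,1) = 0"])
  show "W1 (i,0,0) = 0 \<and> W2 (i,0,0) = 0 \<and> W1 (i,0,1) = 0 \<and> W2 (i,0,1) = 0" using z by simp
next
  fix j :: int assume "W1 (i,j,0) = 0 \<and> W2 (i,j,0) = 0 \<and> W1 (i,j,1) = 0 \<and> W2 (i,j,1) = 0"
  then show "W1 (i,j+1,0) = 0 \<and> W2 (i,j+1,0) = 0 \<and> W1 (i,j+1,1) = 0 \<and> W2 (i,j+1,1) = 0"
    using ladder_step0[OF c, of i j] by blast
next
  fix j :: int assume "W1 (i,j,0) = 0 \<and> W2 (i,j,0) = 0 \<and> W1 (i,j,1) = 0 \<and> W2 (i,j,1) = 0"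
  then show "W1 (i,j-1,0) = 0 \<and> W2 (i,j-1,0) = 0 \<and> W1 (i,j-1,1) = 0 \<and> W2 (i,j-1,1) = 0"
    using ladder_step0[OF c, of i "j-1"] by simp
qed

lemma strip_rigid0:
  assumes c: "con U1 U2" and cc: "cc = 0 \<or> cc = 1"
  shows "U1 (i,j,cc) = - OmS U1 U2 i 0 * of_real ((pos (i,j,cc))$2) + C1S U1 U2 i 0 \<and>
         U2 (i,j,cc) = OmS U1 U2 i 0 * of_real ((pos (i,j,cc))$1) + C2S U1 U2 i 0"
proof -
  define Om where "Om = OmS U1 U2 i 0"
  define C1 where "C1 = C1S U1 U2 i 0"
  define C2 where "C2 = C2S U1 U2 i 0"
  define W1 where "W1 x = U1 x - (- Om * of_real ((pos x)$2) + C1)" for x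
  define W2 where "W2 x = U2 x - (Om * of_real ((pos x)$1) + C2)" for x
  have cw: "con W1 W2" unfolding W1_def W2_def by (rule con_rigid[OF c])
  have g: "gen (i,0,0) (i,0,1)" using gen_ladder(3)[of 0 i 0] by simp
  have zz: "(U1 (i,0,1) - U1 (i,0,0)) + (U2 (i,0,1) - U2 (i,0,0)) = 0"
    using conD[OF c g] by (simp add: pos_def field_simps, (algebra)?)
  have sd: "0+1 = (1::nat)" by simp
  have z: "W1 (i,0,0) = 0" "W2 (i,0,0) = 0" "W1 (i,0,1) = 0" "W2 (i,0,1) = 0"
    unfolding W1_def W2_def Om_def C1_def C2_def OmS_def C1S_def C2S_def sd
      apply (simp add: pos_def)
     apply (simp add: pos_def field_simps)
    using zz apply (simp add: pos_def field_simps) apply ((algebra)?)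
    using zz apply (simp add: pos_def field_simps) apply ((algebra)?)
    done
  have "W1 (i,j,cc) = 0 \<and> W2 (i,j,cc) = 0" using ladder_all0[OF cw z, of j] cc by auto
  then show ?thesis by (simp add: W1_def W2_def Om_def C1_def C2_def)
qed

lemma ladder_all2:
  assumes c: "con W1 W2" and z: "W1 (i,0,2) = 0" "W2 (i,0,2) = 0" "W1 (i,0,3) = 0" "W2 (i,0,3) = 0"
  shows "W1 (i,j,2) = 0 \<and> W2 (i,j,2) = 0 \<and> W1 (i,j,3) = 0 \<and> W2 (i,j,3) = 0"
proof (rule int_induct[where k=0 and P="\<lambda>j. W1 (i,j,2) = 0 \<and> W2 (i,j,2) = 0 \<and> W1 (i,j,3) = 0 \<and> W2 (i,j,3) = 0"])
  show "W1 (i,0,2) = 0 \<and> W2 (i,0,2) = 0 \<and> W1 (i,0,3) = 0 \<and> W2 (i,0,3) = 0" using z by simp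
next
  fix j :: int assume "W1 (i,j,2) = 0 \<and> W2 (i,j,2) = 0 \<and> W1 (i,j,3) = 0 \<and> W2 (i,j,3) = 0"
  then show "W1 (i,j+1,2) = 0 \<and> W2 (i,j+1,2) = 0 \<and> W1 (i,j+1,3) = 0 \<and> W2 (i,j+1,3) = 0"
    using ladder_step2[OF c, of i j] by blast
next
  fix j :: int assume "W1 (i,j,2) = 0 \<and> W2 (i,j,2) = 0 \<and> W1 (i,j,3) = 0 \<and> W2 (i,j,3) = 0"
  then show "W1 (i,j-1,2) = 0 \<and> W2 (i,j-1,2) = 0 \<and> W1 (i,j-1,3) = 0 \<and> W2 (i,j-1,3) = 0"
    using ladder_step2[OF c, of i "j-1"] by simp
qed

lemma strip_rigid2:
  assumes c: "con U1 U2" and cc: "cc = 2 \<or> cc = 3"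
  shows "U1 (i,j,cc) = - OmS U1 U2 i 2 * of_real ((pos (i,j,cc))$2) + C1S U1 U2 i 2 \<and>
         U2 (i,j,cc) = OmS U1 U2 i 2 * of_real ((pos (i,j,cc))$1) + C2S U1 U2 i 2"
proof -
  define Om where "Om = OmS U1 U2 i 2"
  define C1 where "C1 = C1S U1 U2 i 2"
  define C2 where "C2 = C2S U1 U2 i 2"
  define W1 where "W1 x = U1 x - (- Om * of_real ((pos x)$2) + C1)" for x
  define W2 where "W2 x = U2 x - (Om * of_real ((pos x)$1) + C2)" for x
  have cw: "con W1 W2" unfolding W1_def W2_def by (rule con_rigid[OF c])
  have g: "gen (i,0,2) (i,0,3)" using gen_ladder(3)[of 2 i 0] by simp
  have zz: "(U1 (i,0,3) - U1 (i,0,2)) + (U2 (i,0,3) - U2 (i,0,2)) = 0"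
    using conD[OF c g] by (simp add: pos_def field_simps, (algebra)?)
  have sd: "2+1 = (3::nat)" by simp
  have z: "W1 (i,0,2) = 0" "W2 (i,0,2) = 0" "W1 (i,0,3) = 0" "W2 (i,0,3) = 0"
    unfolding W1_def W2_def Om_def C1_def C2_def OmS_def C1S_def C2S_def sd
      apply (simp add: pos_def)
     apply (simp add: pos_def field_simps)
    using zz apply (simp add: pos_def field_simps) apply ((algebra)?)
    using zz apply (simp add: pos_def field_simps) apply ((algebra)?)
    done
  have "W1 (i,j,cc) = 0 \<and> W2 (i,j,cc) = 0" using ladder_all2[OF cw z, of j] cc by auto
  then show ?thesis by (simp add: W1_def W2_def Om_def C1_def C2_def)
qed

lemma int_const: fixes f :: "int \<Rightarrow> 'a" assumes "\<And>i. f (i+1) = f i" shows "f i = f 0"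
proof (rule int_induct[where k=0 and P="\<lambda>i. f i = f 0"])
  show "f 0 = f 0" ..
next
  fix i :: int assume "f i = f 0" then show "f (i+1) = f 0" using assms by simp
next
  fix i :: int assume "f i = f 0" then show "f (i-1) = f 0" using assms[of "i-1"] by simp
qed

lemma gen_inter: "gen (i,j,0) (i,j+1,2)" "gen (i,j,2) (i+1,j-1,0)" "gen (i,j,0) (i+1,j+2,0)" "gen (i,j,2) (i+1,j-2,2)"
  unfolding gen_def offs_def by (auto intro!: exI[of _ i] exI[of _ j])

lemma inter_rigid:
  assumes c: "con U1 U2"
  shows "\<exists>\<omega> K1 K2. \<forall>i j cc. cc < 4 \<longrightarrow> U1 (i,j,cc) = - \<omega> * of_real ((pos (i,j,cc))$2) + K1 \<and>
           U2 (i,j,cc) = \<omega> * of_real ((pos (i,j,cc))$1) + K2"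
proof -
  define wE where "wE i = OmS U1 U2 i 0" for i
  define wO where "wO i = OmS U1 U2 i 2" for i
  define aE where "aE i = C1S U1 U2 i 0" for i
  define bE where "bE i = C2S U1 U2 i 0" for i
  define aO where "aO i = C1S U1 U2 i 2" for i
  define bO where "bO i = C2S U1 U2 i 2" for i
  have RE: "U1 (i,j,0) = - wE i * of_int j + aE i" "U2 (i,j,0) = wE i * (2 * of_int i) + bE i" for i j
    using strip_rigid0[OF c, of 0 i j] by (simp_all add: pos_def wE_def aE_def bE_def)
  have RO: "U1 (i,j,2) = - wO i * of_int j + aO i" "U2 (i,j,2) = wO i * (2 * of_int i + 1) + bO i" for i j
    using strip_rigid2[OF c, of 2 i j] by (simp_all add: pos_def wO_def aO_def bO_def)
  have Ee: "(U1 (i,j,0) - U1 (i,j+1,2)) + (U2 (i,j,0) - U2 (i,j+1,2)) = 0" for i j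
    using conD[OF c gen_inter(1)[of i j]] by (simp add: pos_def, (algebra)?)
  have Ee': "(U1 (i,j,2) - U1 (i+1,j-1,0)) - (U2 (i,j,2) - U2 (i+1,j-1,0)) = 0" for i j
    using conD[OF c gen_inter(2)[of i j]] by (simp add: pos_def, (algebra)?)
  have Ef: "(U1 (i,j,0) - U1 (i+1,j+2,0)) + (U2 (i,j,0) - U2 (i+1,j+2,0)) = 0" for i j
    using conD[OF c gen_inter(3)[of i j]] by (simp add: pos_def, (algebra)?)
  have Ef': "(U1 (i,j,2) - U1 (i+1,j-2,2)) - (U2 (i,j,2) - U2 (i+1,j-2,2)) = 0" for i j
    using conD[OF c gen_inter(4)[of i j]] by (simp add: pos_def, (algebra)?)
  have E1: "(- wE i * of_int j + aE i - (- wO i * (of_int j + 1) + aO i)) + (wE i * (2 * of_int i) + bE i - (wO i * (2 * of_int i + 1) + bO i)) = 0" for i j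
    using Ee[of i j] by (simp add: RE RO)
  have E2: "(- wO i * of_int j + aO i - (- wE (i+1) * (of_int j - 1) + aE (i+1))) - (wO i * (2 * of_int i + 1) + bO i - (wE (i+1) * (2 * of_int i + 2) + bE (i+1))) = 0" for i j
    using Ee'[of i j] by (simp add: RE RO algebra_simps)
  have E3: "(- wE i * of_int j + aE i - (- wE (i+1) * (of_int j + 2) + aE (i+1))) + (wE i * (2 * of_int i) + bE i - (wE (i+1) * (2 * of_int i + 2) + bE (i+1))) = 0" for i j
    using Ef[of i j] by (simp add: RE RO algebra_simps)
  have E4: "(- wO i * of_int j + aO i - (- wO (i+1) * (of_int j - 2) + aO (i+1))) - (wO i * (2 * of_int i + 1) + bO i - (wO (i+1) * (2 * of_int i + 3) + bO (i+1))) = 0" for i j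
    using Ef'[of i j] by (simp add: RE RO algebra_simps)
  have w1: "wO i = wE i" for i using E1[of i 0] E1[of i 1] by simp algebra
  have w2: "wE (i+1) = wO i" for i using E2[of i 0] E2[of i 1] by simp algebra
  have wc: "wE i = wE 0" for i by (rule int_const) (simp add: w1 w2)
  define \<omega> where "\<omega> = wE 0"
  have wE: "wE i = \<omega>" and wO: "wO i = \<omega>" for i using wc w1 by (simp_all add: \<omega>_def)
  have A: "aO i + bO i = aE i + bE i" for i using E1[of i 0] unfolding wE wO by algebra
  have B: "aE (i+1) - bE (i+1) = aO i - bO i" for i using E2[of i 0] unfolding wE wO by algebra
  have C: "aE (i+1) + bE (i+1) = aE i + bE i" for i using E3[of i 0] unfolding wE wO by algebra
  have D: "aO (i+1) - bO (i+1) = aO i - bO i" for i using E4[of i 0] unfolding wE wO by algebra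
  have sE: "aE i + bE i = aE 0 + bE 0" for i by (rule int_const[where f="\<lambda>i. aE i + bE i"]) (rule C)
  have dO: "aO i - bO i = aO 0 - bO 0" for i by (rule int_const[where f="\<lambda>i. aO i - bO i"]) (rule D)
  have dE: "aE i - bE i = aO 0 - bO 0" for i using B[of "i-1"] dO[of "i-1"] by simp
  have KE: "aE i = aE 0 \<and> bE i = bE 0" for i using sE[of i] dE[of i] dE[of 0] by algebra
  have KO: "aO i = aE 0 \<and> bO i = bE 0" for i using A[of i] sE[of i] dO[of i] dE[of 0] by algebra
  show ?thesis
  proof (intro exI allI impI)
    fix i j :: int and cc :: nat assume "cc < 4"
    then have "cc = 0 \<or> cc = 1 \<or> cc = 2 \<or> cc = 3" by auto
    then show "U1 (i,j,cc) = - \<omega> * of_real ((pos (i,j,cc))$2) + aE 0 \<and>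
           U2 (i,j,cc) = \<omega> * of_real ((pos (i,j,cc))$1) + bE 0"
    proof (elim disjE)
      assume "cc = 0" then show ?thesis using strip_rigid0[OF c, of cc i j] wE[of i] KE[of i]
        by (simp add: wE_def aE_def bE_def)
    next
      assume "cc = 1" then show ?thesis using strip_rigid0[OF c, of cc i j] wE[of i] KE[of i]
        by (simp add: wE_def aE_def bE_def)
    next
      assume "cc = 2" then show ?thesis using strip_rigid2[OF c, of cc i j] wO[of i] KO[of i]
        by (simp add: wO_def aO_def bO_def)
    next
      assume "cc = 3" then show ?thesis using strip_rigid2[OF c, of cc i j] wO[of i] KO[of i]
        by (simp add: wO_def aO_def bO_def)
    qed
  qed
qed

definition enc :: "lab \<Rightarrow> nat" where "enc = to_nat"
definition dec :: "nat \<Rightarrow> lab" where "dec = from_nat"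
definition VV :: "nat set" where "VV = enc ` {x. snd (snd x) < 4}"
definition EE :: "nat set set" where "EE = {{enc x, enc y} | x y. gen x y}"
definition pp :: "nat \<Rightarrow> real^2" where "pp v = pos (dec v)"
definition sh :: "int \<times> int \<Rightarrow> lab \<Rightarrow> lab" where "sh k x = (fst x + fst k, fst (snd x) + snd k, snd (snd x))"
definition act :: "int \<times> int \<Rightarrow> nat \<Rightarrow> nat" where "act k v = enc (sh k (dec v))"
definition PP :: "real \<Rightarrow> nat \<Rightarrow> real^2" where "PP t v = pos (dec v) + Tr t (strip (dec v))"
definition Jm :: "real^2^2" where "Jm = vector [vector [0, -1], vector [1, 0]]"

lemma dec_enc [simp]: "dec (enc x) = x" by (simp add: enc_def dec_def)
lemma enc_inj [simp]: "enc x = enc y \<longleftrightarrow> x = y" by (simp add: enc_def)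

lemma gen_lt4: "gen x y \<Longrightarrow> snd (snd x) < 4 \<and> snd (snd y) < 4"
  unfolding gen_def offs_def by auto

lemma gen_neq: "gen x y \<Longrightarrow> x \<noteq> y"
  unfolding gen_def offs_def by auto

lemma gen_sh1: "gen x y \<Longrightarrow> gen (sh k x) (sh k y)"
  unfolding gen_def sh_def
  by (elim exE conjE, rule_tac x=c in exI, rule_tac x=di in exI, rule_tac x=dj in exI, rule_tac x=c' in exI,
      rule_tac x="i + fst k" in exI, rule_tac x="j + snd k" in exI) simp

lemma sh_inv: "sh (- fst k, - snd k) (sh k x) = x" by (simp add: sh_def)

lemma gen_sh: "gen (sh k x) (sh k y) \<longleftrightarrow> gen x y"
  using gen_sh1[of "sh k x" "sh k y" "(- fst k, - snd k)"] gen_sh1[of x y k] sh_inv by auto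

lemma EE_iff: "{enc a, enc b} \<in> EE \<longleftrightarrow> gen a b \<or> gen b a"
proof
  assume "{enc a, enc b} \<in> EE"
  then obtain x y where g: "gen x y" and e: "{enc a, enc b} = {enc x, enc y}" unfolding EE_def by blast
  from e have "(a = x \<and> b = y) \<or> (a = y \<and> b = x)" by (auto simp: doubleton_eq_iff)
  then show "gen a b \<or> gen b a" using g by auto
next
  assume "gen a b \<or> gen b a"
  then show "{enc a, enc b} \<in> EE"
  proof
    assume "gen a b" then show ?thesis unfolding EE_def by blast
  next
    assume "gen b a" then have "{enc b, enc a} \<in> EE" unfolding EE_def by blast
    then show ?thesis by (simp add: insert_commute)
  qed
qed

lemma VV_iff: "v \<in> VV \<longleftrightarrow> (\<exists>x. v = enc x \<and> snd (snd x) < 4)" unfolding VV_def by auto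

lemma pos_inj: assumes "snd (snd x) < 4" "snd (snd y) < 4" "pos x = pos y" shows "x = y"
proof -
  obtain i j c where x: "x = (i,j,c)" by (cases x) auto
  obtain i' j' c' where y: "y = (i',j',c')" by (cases y) auto
  have h1: "2 * real_of_int i + real c / 2 = 2 * real_of_int i' + real c' / 2"
    and h2: "real_of_int j + (if odd c then 1/2 else 0) = real_of_int j' + (if odd c' then 1/2 else 0)"
    using assms(3) unfolding x y pos_def by (simp_all add: vec2_eq_iff)
  from h1 have "real_of_int (4*i + int c) = real_of_int (4*i' + int c')" by simp
  then have "4*i + int c = 4*i' + int c'" by (simp only: of_int_eq_iff)
  then have ic: "i = i' \<and> c = c'" using assms(1,2) unfolding x y by simp presburger
  then have "j = j'" using h2 by simp
  then show ?thesis using ic x y by simp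
qed

lemma Jm_mult: "Jm *v x = mk (- x$2) (x$1)"
  by (simp add: Jm_def matrix_vector_mult_def vec2_eq_iff sum_2)

lemma Jm_skew: "skew Jm"
  unfolding skew_def Jm_def transpose_def by (simp add: vec2_eq_iff)

lemma sum3: "(\<Sum>j<(3::nat). f j) = f 0 + f 1 + (f 2 :: 'a::comm_monoid_add)"
  by (simp add: eval_nat_numeral)

lemma act_enc [simp]: "act k (enc x) = enc (sh k x)" by (simp add: act_def)

lemma cf_simple: "simple_graph VV EE"
  unfolding simple_graph_def
proof
  fix e assume "e \<in> EE"
  then obtain x y where g: "gen x y" and e: "e = {enc x, enc y}" unfolding EE_def by blast
  show "e \<subseteq> VV \<and> card e = 2" using gen_lt4[OF g] gen_neq[OF g] unfolding e VV_def by auto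
qed

lemma cf_inj: "inj_on pp VV"
  unfolding inj_on_def VV_def pp_def using pos_inj by auto

lemma cf_action: "graph_aut_action VV EE act"
proof -
  have a1: "\<forall>k. \<forall>v\<in>VV. act k v \<in> VV" unfolding VV_def by (auto simp: sh_def)
  have a2: "\<forall>v\<in>VV. act (0,0) v = v" unfolding VV_def by (auto simp: sh_def)
  have a3: "\<forall>k l. \<forall>v\<in>VV. act (fst k + fst l, snd k + snd l) v = act k (act l v)"
    unfolding VV_def by (auto simp: sh_def algebra_simps)
  have a4: "\<forall>k. \<forall>v\<in>VV. \<forall>w\<in>VV. {v, w} \<in> EE \<longleftrightarrow> {act k v, act k w} \<in> EE"
  proof (intro allI ballI)
    fix k v w assume "v \<in> VV" "w \<in> VV"
    then obtain x y where "v = enc x" "w = enc y" unfolding VV_def by blast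
    then show "{v, w} \<in> EE \<longleftrightarrow> {act k v, act k w} \<in> EE" by (simp add: EE_iff gen_sh)
  qed
  show ?thesis unfolding graph_aut_action_def using a1 a2 a3 a4 by blast
qed

lemma cf_period: "\<forall>k. \<forall>v\<in>VV. pp (act k v) = pp v + lattice_vec (mk 2 0) (mk 0 1) k"
proof (intro allI ballI)
  fix k :: "int \<times> int" and v assume "v \<in> VV"
  then obtain x where v: "v = enc x" unfolding VV_def by blast
  obtain i j c where x: "x = (i,j,c)" by (cases x) auto
  obtain k1 k2 where k: "k = (k1,k2)" by (cases k) auto
  show "pp (act k v) = pp v + lattice_vec (mk 2 0) (mk 0 1) k"
    unfolding v x k by (simp add: pp_def sh_def pos_def lattice_vec_def vec2_eq_iff algebra_simps)
qed

lemma cf_vorb: "finite ((\<lambda>v. {act k v | k. True}) ` VV)"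
proof (rule finite_subset)
  show "(\<lambda>v. {act k v | k. True}) ` VV \<subseteq> (\<lambda>c. {enc (a,b,c) | a b. True}) ` {..<(4::nat)}"
  proof
    fix Ob assume "Ob \<in> (\<lambda>v. {act k v | k. True}) ` VV"
    then obtain i j c where c: "c < 4" and Ob: "Ob = {act k (enc (i,j,c)) | k. True}" unfolding VV_def by auto
    have "Ob = {enc (a,b,c) | a b. True}"
    proof
      show "Ob \<subseteq> {enc (a,b,c) | a b. True}" unfolding Ob by (auto simp: sh_def)
      show "{enc (a,b,c) | a b. True} \<subseteq> Ob"
      proof
        fix z assume "z \<in> {enc (a,b,c) | a b. True}"
        then obtain a b where z: "z = enc (a,b,c)" by blast
        have "z = act (a - i, b - j) (enc (i,j,c))" unfolding z by (simp add: sh_def)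
        then show "z \<in> Ob" unfolding Ob by blast
      qed
    qed
    then show "Ob \<in> (\<lambda>c. {enc (a,b,c) | a b. True}) ` {..<(4::nat)}" using c by auto
  qed
  show "finite ((\<lambda>c. {enc (a,b,c) | a b. True}) ` {..<(4::nat)})" by simp
qed

definition orbE :: "nat \<times> int \<times> int \<times> nat \<Rightarrow> nat set set" where
  "orbE q = (case q of (c,di,dj,c') \<Rightarrow> {{enc (a,b,c), enc (a+di,b+dj,c')} | a b. True})"

lemma cf_eorb: "finite ((\<lambda>e. {act k ` e | k. True}) ` EE)"
proof (rule finite_subset)
  show "(\<lambda>e. {act k ` e | k. True}) ` EE \<subseteq> orbE ` set offs"
  proof
    fix Ob assume "Ob \<in> (\<lambda>e. {act k ` e | k. True}) ` EE"
    then obtain x y where g: "gen x y" and Ob: "Ob = {act k ` {enc x, enc y} | k. True}" unfolding EE_def by blast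
    obtain c di dj c' i j where o: "(c,di,dj,c') \<in> set offs" and xy: "x = (i,j,c)" "y = (i+di,j+dj,c')"
      using g unfolding gen_def by blast
    have "Ob = orbE (c,di,dj,c')"
    proof
      show "Ob \<subseteq> orbE (c,di,dj,c')"
      proof
        fix z assume "z \<in> Ob"
        then obtain k where z: "z = act k ` {enc x, enc y}" unfolding Ob by blast
        have zz: "z = {enc (i + fst k, j + snd k, c), enc ((i + fst k) + di, (j + snd k) + dj, c')}"
          unfolding z xy by (simp add: sh_def algebra_simps)
        have "z \<in> {{enc (a,b,c), enc (a+di,b+dj,c')} | a b. True}" using zz by blast
        then show "z \<in> orbE (c,di,dj,c')" by (simp add: orbE_def)
      qed
      show "orbE (c,di,dj,c') \<subseteq> Ob"
      proof
        fix z assume "z \<in> orbE (c,di,dj,c')"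
        then obtain a b where z: "z = {enc (a,b,c), enc (a+di,b+dj,c')}" unfolding orbE_def by auto
        have "z = act (a - i, b - j) ` {enc x, enc y}" unfolding z xy by (simp add: sh_def algebra_simps)
        then show "z \<in> Ob" unfolding Ob by blast
      qed
    qed
    then show "Ob \<in> orbE ` set offs" using o by blast
  qed
  show "finite (orbE ` set offs)" by simp
qed

lemma cf: "crystal_framework VV EE pp"
proof -
  have ind: "\<forall>c1 c2::real. c1 *\<^sub>R mk 2 0 + c2 *\<^sub>R mk 0 1 = 0 \<longrightarrow> c1 = 0 \<and> c2 = 0" by (simp add: vec2_eq_iff)
  show ?thesis unfolding crystal_framework_def
    using cf_simple cf_inj ind cf_action cf_period cf_vorb cf_eorb by blast
qed

lemma skew_zero: "skew (0::real^2^2)"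
  unfolding skew_def transpose_def by (simp add: vec_eq_iff)

lemma mat0_mult: "(0::real^2^2) *v x = 0"
  by (simp add: matrix_vector_mult_def vec_eq_iff)

lemma rigid_sum:
  fixes \<omega> K1 K2 :: complex
  assumes r: "z $ 1 = - \<omega> * of_real (q $ 2) + K1" "z $ 2 = \<omega> * of_real (q $ 1) + K2"
  shows "z = (\<Sum>j<(3::nat). (if j = 0 then \<omega> else if j = 1 then K1 else K2) *s
                 cvec ((if j = 0 then Jm else 0) *v q + (if j = 0 then 0 else if j = 1 then mk 1 0 else mk 0 1)))"
proof -
  have "(\<Sum>j<(3::nat). (if j = 0 then \<omega> else if j = 1 then K1 else K2) *s
                 cvec ((if j = 0 then Jm else 0) *v q + (if j = 0 then 0 else if j = 1 then mk 1 0 else mk 0 1)))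
        = \<omega> *s cvec (Jm *v q) + K1 *s cvec (mk 1 0) + K2 *s cvec (mk 0 1)"
    unfolding sum3 by (simp add: mat0_mult)
  also have "\<dots> = z"
    unfolding vec2_eq_iff using r by (simp add: cvec_def Jm_mult)
  finally show ?thesis by simp
qed

lemma for_rigid: "first_order_rigid VV EE pp"
  unfolding first_order_rigid_def
proof (intro allI impI)
  fix u assume inf: "inf_flex VV EE pp u"
  define U1 where "U1 x = u (enc x) $ 1" for x
  define U2 where "U2 x = u (enc x) $ 2" for x
  have c: "con U1 U2" unfolding con_def
  proof (intro allI impI)
    fix x y assume g: "gen x y"
    have mem: "enc x \<in> VV" "enc y \<in> VV" using gen_lt4[OF g] unfolding VV_def by auto
    have e: "{enc x, enc y} \<in> EE" using g by (simp add: EE_iff)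
    have "cdot (u (enc x) - u (enc y)) (pp (enc x) - pp (enc y)) = 0"
      using inf mem e unfolding inf_flex_def by blast
    then show "(U1 x - U1 y) * of_real ((pos x)$1 - (pos y)$1) + (U2 x - U2 y) * of_real ((pos x)$2 - (pos y)$2) = 0"
      by (simp add: cdot_def sum_2 U1_def U2_def pp_def)
  qed
  obtain \<omega> K1 K2 where R: "\<And>i j cc. cc < 4 \<Longrightarrow> U1 (i,j,cc) = - \<omega> * of_real ((pos (i,j,cc))$2) + K1 \<and>
           U2 (i,j,cc) = \<omega> * of_real ((pos (i,j,cc))$1) + K2"
    using inter_rigid[OF c] by blast
  have sk: "\<forall>j<(3::nat). skew (if j = 0 then Jm else 0)" using Jm_skew skew_zero by simp
  have rep: "\<forall>v\<in>VV. u v = (\<Sum>j<(3::nat). (if j = 0 then \<omega> else if j = 1 then K1 else K2) *s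
                 cvec ((if j = 0 then Jm else 0) *v pp v + (if j = 0 then 0 else if j = 1 then mk 1 0 else mk 0 1)))"
  proof
    fix v assume "v \<in> VV"
    then obtain i j cc where v: "v = enc (i,j,cc)" and cc: "cc < 4" unfolding VV_def by auto
    have r: "u v $ 1 = - \<omega> * of_real ((pp v) $ 2) + K1" "u v $ 2 = \<omega> * of_real ((pp v) $ 1) + K2"
      using R[OF cc] unfolding v U1_def U2_def pp_def by auto
    show "u v = (\<Sum>j<(3::nat). (if j = 0 then \<omega> else if j = 1 then K1 else K2) *s
                 cvec ((if j = 0 then Jm else 0) *v pp v + (if j = 0 then 0 else if j = 1 then mk 1 0 else mk 0 1)))"
      by (rule rigid_sum[OF r])
  qed
  show "in_rigid_span VV pp u" unfolding in_rigid_span_def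
    apply (rule exI[of _ 3])
    apply (rule exI[of _ "\<lambda>j. if j = 0 then \<omega> else if j = 1 then K1 else K2"])
    apply (rule exI[of _ "\<lambda>j. if j = 0 then Jm else 0"])
    apply (rule exI[of _ "\<lambda>j. if j = 0 then 0 else if j = 1 then mk 1 0 else mk 0 1"])
    using sk rep by simp
qed

lemma cflex: "continuously_flexible VV EE pp"
  unfolding continuously_flexible_def
proof (intro exI[of _ "1::real"] conjI exI[of _ PP])
  show "(0::real) < 1" by simp
  show "\<forall>v\<in>VV. PP 0 v = pp v" by (simp add: PP_def pp_def Tr_zero)
  show "\<forall>v\<in>VV. continuous_on {0..1} (\<lambda>t. PP t v)"
    unfolding PP_def
    by (intro ballI continuous_on_add continuous_on_const continuous_on_subset[OF cont_Tr]) simp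
  show "\<forall>t\<in>{0..1}. \<forall>v\<in>VV. \<forall>w\<in>VV. {v, w} \<in> EE \<longrightarrow> dist (PP t v) (PP t w) = dist (pp v) (pp w)"
  proof (intro ballI impI)
    fix t v w assume t: "t \<in> {0..(1::real)}" and vw: "v \<in> VV" "w \<in> VV" and e: "{v, w} \<in> EE"
    obtain x y where xy: "v = enc x" "w = enc y" using vw unfolding VV_def by blast
    have g: "gen x y \<or> gen y x" using e xy by (simp add: EE_iff)
    have t01: "0 \<le> t" "t \<le> 1" using t by auto
    show "dist (PP t v) (PP t w) = dist (pp v) (pp w)"
      using g flex_edge[OF _ t01, of x y] flex_edge[OF _ t01, of y x]
      unfolding xy PP_def pp_def by (auto simp: dist_commute)
  qed
  show "\<exists>t\<in>{0..1}. \<not> (\<exists>T. isometry2 T \<and> (\<forall>v\<in>VV. PP t v = T (pp v)))"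
  proof (intro bexI[of _ 1] notI)
    show "(1::real) \<in> {0..1}" by simp
    assume "\<exists>T. isometry2 T \<and> (\<forall>v\<in>VV. PP 1 v = T (pp v))"
    then obtain T where T: "isometry2 T" "\<forall>v\<in>VV. PP 1 v = T (pp v)" by blast
    have m: "enc (0,0,0) \<in> VV" "enc (0,0,2) \<in> VV" by (auto simp: VV_def)
    have "dist (PP 1 (enc (0,0,0))) (PP 1 (enc (0,0,2))) = dist (pp (enc (0,0,0))) (pp (enc (0,0,2)))"
      using T m unfolding isometry2_def by simp
    moreover have "Tr 1 0 = 0" by (simp add: Tr_def)
    moreover have "Tr 1 1 = Dv 1 0" using Tr_step[of 1 0] \<open>Tr 1 0 = 0\<close> by simp
    moreover have "sig 1 0 = 1" by (simp add: sig_def)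
    moreover have "hh 1 = 2/5" "kk 1 = 6/5" by (simp_all add: hh_def kk_def)
    ultimately have "sqrt ((7/5)^2 + (-6/5)^2) = sqrt (1::real)"
      by (simp add: PP_def pp_def pos_def strip_def Dv_def dist_r2)
    then show False by (simp add: power2_eq_square)
  qed
qed

theorem mainTheorem4:
  shows "\<exists>(V :: nat set) (E :: nat set set) (p :: nat \<Rightarrow> real^2).
           crystal_framework V E p \<and> first_order_rigid V E p \<and> continuously_flexible V E p"
  using cf for_rigid cflex by blast

end
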